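(* Consider $N$ users indexed by $\mathcal{U}=\{1,\dots,N\}$ with fixed channel power gains $h_1,\dots,h_N>0$, noise variance $\eta>0$, target throughputs $\theta_1,\dots,\theta_N>0$, and strategy sets $\mathcal{P}^i=[0,P_i^{max}]$ with $P_i^{max}>0$. For $\mathbf{P}\in\prod_i\mathcal{P}^i$ let $r_i(\mathbf{P})=\log_2\!\big(1+\frac{h_iP_i}{\eta+\sum_{j\neq i}h_jP_j}\big)$. Let $\mathcal{S}$ be the set of satisfaction equilibria, i.e. profiles $\mathbf{P}\in\prod_i\mathcal{P}^i$ with $r_i(\mathbf{P})\ge\theta_i$ for all $i$, and suppose $\mathcal{S}\neq\emptyset$. Then the efficient satisfaction equilibrium (a minimizer of $\sum_{i}P_i$ over $\mathcal{S}$) is unique, and it is the solution of the system $r_i(\mathbf{P})=\theta_i$ for all $i\in\mathcal{U}$.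
   Context: The system $r_i(\mathbf{P})=\theta_i$, $i\in\mathcal{U}$, is equivalent to the linear system $h_iP_i-(2^{\theta_i}-1)\sum_{j\neq i}h_jP_j=(2^{\theta_i}-1)\eta$, $i\in\mathcal{U}$. *)

theory Defs
  imports Complex_Main
begin

text \<open>Users are indexed by a finite type 'u (so N = CARD('u)).
  A power profile is a function P :: 'u \<Rightarrow> real.\<close>

definition rate :: "('u::finite \<Rightarrow> real) \<Rightarrow> real \<Rightarrow> 'u \<Rightarrow> ('u \<Rightarrow> real) \<Rightarrow> real" where
  "rate h \<eta> i P = log 2 (1 + h i * P i / (\<eta> + (\<Sum>j\<in>UNIV - {i}. h j * P j)))"

definition strategy_space :: "('u::finite \<Rightarrow> real) \<Rightarrow> ('u \<Rightarrow> real) set" where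
  "strategy_space Pmax = {P. \<forall>i. 0 \<le> P i \<and> P i \<le> Pmax i}"

definition satisfaction_equilibria ::
  "('u::finite \<Rightarrow> real) \<Rightarrow> real \<Rightarrow> ('u \<Rightarrow> real) \<Rightarrow> ('u \<Rightarrow> real) \<Rightarrow> ('u \<Rightarrow> real) set" where
  "satisfaction_equilibria h \<eta> \<theta> Pmax =
     {P \<in> strategy_space Pmax. \<forall>i. rate h \<eta> i P \<ge> \<theta> i}"

definition efficient_SE ::
  "('u::finite \<Rightarrow> real) \<Rightarrow> real \<Rightarrow> ('u \<Rightarrow> real) \<Rightarrow> ('u \<Rightarrow> real) \<Rightarrow> ('u \<Rightarrow> real) \<Rightarrow> bool" where
  "efficient_SE h \<eta> \<theta> Pmax P \<longleftrightarrow>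
     P \<in> satisfaction_equilibria h \<eta> \<theta> Pmax \<and>
     (\<forall>Q \<in> satisfaction_equilibria h \<eta> \<theta> Pmax. (\<Sum>i\<in>UNIV. P i) \<le> (\<Sum>i\<in>UNIV. Q i))"

end

theory Submission
  imports Defs
begin

lemma rate_char:
  fixes h P :: "'u::finite \<Rightarrow> real" and \<eta> t :: real
  assumes h: "\<And>j. h j > 0" and eta: "\<eta> > 0" and P: "\<And>j. P j \<ge> 0"
  defines "T \<equiv> \<eta> + (\<Sum>j\<in>UNIV. h j * P j)"
  defines "a \<equiv> (2 powr t - 1) / 2 powr t"
  shows "(t \<le> rate h \<eta> i P \<longleftrightarrow> a * T \<le> h i * P i) \<and>
         (rate h \<eta> i P = t \<longleftrightarrow> h i * P i = a * T)"
proof -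
  define D where "D = \<eta> + (\<Sum>j\<in>UNIV - {i}. h j * P j)"
  define x where "x = h i * P i"
  define c where "c = (2::real) powr t"
  have c0: "c > 0" unfolding c_def by simp
  have "(\<Sum>j\<in>UNIV - {i}. h j * P j) \<ge> 0"
    by (rule sum_nonneg) (use h P in \<open>auto intro: mult_nonneg_nonneg less_imp_le\<close>)
  hence D0: "D > 0" unfolding D_def using eta by linarith
  have x0: "x \<ge> 0" unfolding x_def using h[of i] P[of i] by simp
  have TD: "T = x + D" unfolding T_def D_def x_def
    by (simp add: sum.remove[of UNIV i])
  have r: "rate h \<eta> i P = log 2 (T / D)"
    unfolding rate_def D_def[symmetric] x_def[symmetric] using D0 TD
    by (simp add: field_simps)
  have TD0: "T / D > 0" using TD D0 x0 by simp
  have a_eq: "a = (c - 1) / c" unfolding a_def c_def by simp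
  have 1: "t \<le> rate h \<eta> i P \<longleftrightarrow> c \<le> T / D"
    unfolding r c_def using le_log_iff[of 2 "T/D" t] TD0 by simp
  have "c \<le> T / D \<longleftrightarrow> c * D \<le> T" using D0 by (simp add: field_simps)
  also have "\<dots> \<longleftrightarrow> (c - 1) * T \<le> c * x" using TD by (simp add: algebra_simps)
  also have "\<dots> \<longleftrightarrow> a * T \<le> x" unfolding a_eq using c0 by (simp add: field_simps)
  finally have A: "t \<le> rate h \<eta> i P \<longleftrightarrow> a * T \<le> x" using 1 by simp
  have 2: "rate h \<eta> i P = t \<longleftrightarrow> T / D = c"
  proof
    assume "rate h \<eta> i P = t"
    then show "T / D = c" unfolding r c_def using TD0 by auto
  next
    assume "T / D = c"
    then show "rate h \<eta> i P = t" unfolding r c_def by simp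
  qed
  have "T / D = c \<longleftrightarrow> c * D = T" using D0 by (auto simp add: field_simps)
  also have "\<dots> \<longleftrightarrow> (c - 1) * T = c * x" using TD by (auto simp add: algebra_simps)
  also have "\<dots> \<longleftrightarrow> x = a * T" unfolding a_eq using c0 by (auto simp add: field_simps)
  finally have B: "rate h \<eta> i P = t \<longleftrightarrow> x = a * T" using 2 by simp
  show ?thesis using A B unfolding x_def by simp
qed

theorem proposition2:
  fixes h \<theta> Pmax :: "'u::finite \<Rightarrow> real" and \<eta> :: real
  assumes "\<And>i. h i > 0" and "\<eta> > 0" and "\<And>i. \<theta> i > 0" and "\<And>i. Pmax i > 0"
    and "satisfaction_equilibria h \<eta> \<theta> Pmax \<noteq> {}"
  shows "(\<exists>!P. efficient_SE h \<eta> \<theta> Pmax P) \<and>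
         (\<forall>P. efficient_SE h \<eta> \<theta> Pmax P \<longleftrightarrow>
              (P \<in> strategy_space Pmax \<and> (\<forall>i. rate h \<eta> i P = \<theta> i)))"
proof -
  note h = assms(1) and eta = assms(2)
  define a where "a i = (2 powr \<theta> i - 1) / 2 powr \<theta> i" for i
  define T where "T P = \<eta> + (\<Sum>j\<in>UNIV. h j * P j)" for P :: "'u \<Rightarrow> real"
  define A where "A = (\<Sum>i\<in>UNIV. a i)"
  have a0: "a i \<ge> 0" for i
  proof -
    have "2 powr \<theta> i \<ge> 1" using assms(3)[of i] by (simp add: ge_one_powr_ge_zero less_imp_le)
    thus ?thesis unfolding a_def by simp
  qed
  have RC: "\<And>P i. (\<And>j. P j \<ge> 0) \<Longrightarrow> (\<theta> i \<le> rate h \<eta> i P \<longleftrightarrow> a i * T P \<le> h i * P i) \<and>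
         (rate h \<eta> i P = \<theta> i \<longleftrightarrow> h i * P i = a i * T P)"
    unfolding a_def T_def by (rule rate_char[OF h eta])
  have Tge: "T P \<ge> \<eta>" if "\<And>j. P j \<ge> 0" for P
  proof -
    have "(\<Sum>j\<in>UNIV. h j * P j) \<ge> 0"
      by (rule sum_nonneg) (use h that in \<open>auto intro: mult_nonneg_nonneg less_imp_le\<close>)
    thus ?thesis unfolding T_def by simp
  qed
  have key: "\<eta> \<le> (1 - A) * T P" if P0: "\<And>j. P j \<ge> 0" and le: "\<And>i. a i * T P \<le> h i * P i" for P
  proof -
    have "A * T P = (\<Sum>i\<in>UNIV. a i * T P)" unfolding A_def by (simp add: sum_distrib_right)
    also have "\<dots> \<le> (\<Sum>i\<in>UNIV. h i * P i)" by (rule sum_mono) (rule le)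
    also have "\<dots> = T P - \<eta>" unfolding T_def by simp
    finally show ?thesis by (simp add: algebra_simps)
  qed
  obtain Q where Q: "Q \<in> satisfaction_equilibria h \<eta> \<theta> Pmax" using assms(5) by blast
  have Q0: "\<And>j. Q j \<ge> 0" using Q unfolding satisfaction_equilibria_def strategy_space_def by auto
  have Qle: "\<And>i. a i * T Q \<le> h i * Q i"
    using Q RC[OF Q0] unfolding satisfaction_equilibria_def by auto
  have A1: "A < 1"
  proof (rule ccontr)
    assume "\<not> A < 1"
    hence "(1 - A) * T Q \<le> 0" using Tge[of Q] Q0 eta by (simp add: mult_nonpos_nonneg)
    thus False using key[OF Q0 Qle] eta by linarith
  qed
  define Ts where "Ts = \<eta> / (1 - A)"
  define Ps where "Ps i = a i * Ts / h i" for i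
  have Ts0: "Ts > 0" unfolding Ts_def using A1 eta by simp
  have Ps0: "\<And>j. Ps j \<ge> 0" unfolding Ps_def using a0 Ts0 h by (simp add: less_imp_le)
  have hPs: "h i * Ps i = a i * Ts" for i unfolding Ps_def using h[of i] by simp
  have TPs: "T Ps = Ts"
  proof -
    have "T Ps = \<eta> + A * Ts" unfolding T_def hPs A_def by (simp add: sum_distrib_right)
    also have "\<dots> = Ts" unfolding Ts_def using A1 by (simp add: field_simps)
    finally show ?thesis .
  qed
  have Psrate: "rate h \<eta> i Ps = \<theta> i" for i using RC[OF Ps0] hPs TPs by simp
  have below: "Ps i \<le> P i" if P0: "\<And>j. P j \<ge> 0" and le: "\<And>i. a i * T P \<le> h i * P i" for P i
  proof -
    have "Ts \<le> T P" using key[of P, OF P0 le] A1 unfolding Ts_def by (simp add: field_simps)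
    hence "a i * Ts \<le> a i * T P" using a0[of i] by (simp add: mult_left_mono)
    hence "h i * Ps i \<le> h i * P i" using le[of i] hPs[of i] by linarith
    thus ?thesis using h[of i] by simp
  qed
  have SEbelow: "\<And>i. Ps i \<le> P i" if "P \<in> satisfaction_equilibria h \<eta> \<theta> Pmax" for P
  proof -
    have P0: "\<And>j. P j \<ge> 0" using that unfolding satisfaction_equilibria_def strategy_space_def by auto
    have "\<And>i. a i * T P \<le> h i * P i" using that RC[OF P0] unfolding satisfaction_equilibria_def by auto
    thus "\<And>i. Ps i \<le> P i" using below[of P, OF P0] by blast
  qed
  have Ps_space: "Ps \<in> strategy_space Pmax"
    unfolding strategy_space_def using Ps0 SEbelow[OF Q] Q
    unfolding satisfaction_equilibria_def strategy_space_def by (auto intro: order_trans)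
  have PsSE: "Ps \<in> satisfaction_equilibria h \<eta> \<theta> Pmax"
    unfolding satisfaction_equilibria_def using Ps_space Psrate by simp
  have effPs: "efficient_SE h \<eta> \<theta> Pmax Ps"
    unfolding efficient_SE_def using PsSE SEbelow by (auto intro: sum_mono)
  have eff_iff: "efficient_SE h \<eta> \<theta> Pmax P \<longleftrightarrow> P = Ps" for P
  proof
    assume e: "efficient_SE h \<eta> \<theta> Pmax P"
    hence PSE: "P \<in> satisfaction_equilibria h \<eta> \<theta> Pmax" and
      s: "(\<Sum>i\<in>UNIV. P i) \<le> (\<Sum>i\<in>UNIV. Ps i)" using PsSE unfolding efficient_SE_def by auto
    have d0: "\<And>i. P i - Ps i \<ge> 0" using SEbelow[OF PSE] by simp
    have "(\<Sum>i\<in>UNIV. P i - Ps i) \<le> 0" using s by (simp add: sum_subtractf)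
    moreover have "(\<Sum>i\<in>UNIV. P i - Ps i) \<ge> 0" by (rule sum_nonneg) (use d0 in blast)
    ultimately have "(\<Sum>i\<in>UNIV. P i - Ps i) = 0" by linarith
    hence "\<forall>i\<in>UNIV. P i - Ps i = 0" using sum_nonneg_eq_0_iff[of UNIV "\<lambda>i. P i - Ps i"] d0 by (meson finite UNIV_I)
    thus "P = Ps" by auto
  next
    assume "P = Ps" thus "efficient_SE h \<eta> \<theta> Pmax P" using effPs by simp
  qed
  have eq_iff: "(P \<in> strategy_space Pmax \<and> (\<forall>i. rate h \<eta> i P = \<theta> i)) \<longleftrightarrow> P = Ps" for P
  proof
    assume as: "P \<in> strategy_space Pmax \<and> (\<forall>i. rate h \<eta> i P = \<theta> i)"
    have P0: "\<And>j. P j \<ge> 0" using as unfolding strategy_space_def by auto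
    have e: "\<And>i. h i * P i = a i * T P" using as RC[OF P0] by auto
    have "T P = \<eta> + (\<Sum>j\<in>UNIV. h j * P j)" unfolding T_def by simp
    also have "(\<Sum>j\<in>UNIV. h j * P j) = (\<Sum>j\<in>UNIV. a j * T P)" by (rule sum.cong) (use e in auto)
    also have "\<dots> = A * T P" unfolding A_def by (simp add: sum_distrib_right)
    finally have "T P = \<eta> + A * T P" .
    hence "T P = Ts" unfolding Ts_def using A1 by (simp add: field_simps)
    hence hh: "h i * P i = h i * Ps i" for i using e hPs by simp
    have "P i = Ps i" for i using hh[of i] h[of i] by simp
    thus "P = Ps" by (rule ext)
  next
    assume "P = Ps" thus "P \<in> strategy_space Pmax \<and> (\<forall>i. rate h \<eta> i P = \<theta> i)"
      using Ps_space Psrate by simp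
  qed
  show ?thesis using eff_iff eq_iff by auto
qed

end
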